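(* Let $N=M=1$ and $\sigma>0$. For every GKP-stabilizer code $(\bm S_{\rm enc},\bm M,\bm f)$ with $\bm S_{\rm enc}\in{\rm Sp}(4,\mathbb R)$ whose ancilla lattice is canonical (i.e. $\bm M^\top\bm\Omega_1\bm M=2\pi\bm\Omega_1$), there exist a gain $G\ge1$, a matrix $\bm\Lambda\in{\rm Sp}(2,\mathbb R)$ and a measurable estimator $\bm f'$ such that the TMS code with encoding $\bm S_G$, ancilla lattice generator $\sqrt{2\pi}\,\bm\Lambda\bm\Omega_1$ (the square lattice transformed by $\bm\Lambda$) and estimator $\bm f'$ has the same geometric-mean error. Hence the optimal such code, in terms of geometric-mean error, is a TMS code with a single-mode lattice obtained from the square lattice by a symplectic transformation.
   Context: $\bm\Omega_1=\begin{pmatrix}0&1\\-1&0\end{pmatrix}$, $\bm\Omega=\bm\Omega_1\oplus\bm\Omega_1$ on two modes; ${\rm Sp}(2n,\mathbb R)=\{\bm S:\bm S\bm\Omega\bm S^\top=\bm\Omega\}$. $\bm S_G=\begin{pmatrix}\sqrt G\bm I_2&\sqrt{G-1}\bm Z\\ \sqrt{G-1}\bm Z&\sqrt G\bm I_2\end{pmatrix}$, $\bm Z={\rm diag}(1,-1)$. $R_{\sqrt{2\pi}}$ reduces each coordinate modulo $\sqrt{2\pi}$ into $[-\sqrt{\pi/2},\sqrt{\pi/2})$. Code model: mode 1 is data, mode 2 ancilla; a code $(\bm S_{\rm enc},\bm M,\bm f)$ has $\bm S_{\rm enc}\in{\rm Sp}(4,\mathbb R)$, invertible lattice generator $\bm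 M\in\mathbb R^{2\times2}$, measurable $\bm f:\mathbb R^2\to\mathbb R^2$; with $\bm\xi\sim\mathcal N(0,\sigma^2\bm I_4)$, $\bm x=\bm S_{\rm enc}^{-1}\bm\xi=(\bm x_d,\bm x_a)$, syndrome $\bm s=R_{\sqrt{2\pi}}(\bm M^\top\bm\Omega_1\bm x_a)$, residual $\bm\varepsilon=\bm x_d-\bm f(\bm s)$, $\bm V_{\rm out}=\mathbb E[\bm\varepsilon\bm\varepsilon^\top]$, geometric-mean error $\bar\sigma^2_{\rm GM}=(\det\bm V_{\rm out})^{1/2}$. *)

theory Defs
  imports "HOL-Analysis.Analysis" "HOL-Probability.Probability"
begin

text \<open>Mode 1 (data) = coordinates 1,2 (q1,p1),
 mode 2 (ancilla) = coordinates 3,4 (q2,p2).\<close>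

definition idx4 :: "4 \<Rightarrow> nat" where
  "idx4 i = (if i = 1 then 1 else if i = 2 then 2 else if i = 3 then 3 else 4)"

definition mat4 :: "(nat \<Rightarrow> nat \<Rightarrow> real) \<Rightarrow> real^4^4" where
  "mat4 g = (\<chi> i j. g (idx4 i) (idx4 j))"

definition vec2 :: "real \<Rightarrow> real \<Rightarrow> real^2" where
  "vec2 a b = (\<chi> i. if i = 1 then a else b)"

definition mat2 :: "real \<Rightarrow> real \<Rightarrow> real \<Rightarrow> real \<Rightarrow> real^2^2" where
  "mat2 a b c d = (\<chi> i. if i = 1 then vec2 a b else vec2 c d)"

definition Omega1 :: "real^2^2" where
  "Omega1 = mat2 0 1 (-1) 0"

definition Omega2 :: "real^4^4" where
  "Omega2 = mat4 (\<lambda>i j. if (i = 1 \<and> j = 2) \<or> (i = 3 \<and> j = 4) then 1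
                        else if (i = 2 \<and> j = 1) \<or> (i = 4 \<and> j = 3) then -1 else 0)"

definition symplectic2 :: "real^2^2 \<Rightarrow> bool" where
  "symplectic2 S \<longleftrightarrow> S ** Omega1 ** transpose S = Omega1"

definition symplectic4 :: "real^4^4 \<Rightarrow> bool" where
  "symplectic4 S \<longleftrightarrow> S ** Omega2 ** transpose S = Omega2"

definition S_TMS :: "real \<Rightarrow> real^4^4" where
  "S_TMS G = mat4 (\<lambda>i j.
     if i = j then sqrt G
     else if (i = 1 \<and> j = 3) \<or> (i = 3 \<and> j = 1) then sqrt (G - 1)
     else if (i = 2 \<and> j = 4) \<or> (i = 4 \<and> j = 2) then - sqrt (G - 1)
     else 0)"

definition modred :: "real \<Rightarrow> real" where
  "modred t = t - sqrt (2*pi) * of_int \<lfloor>t / sqrt (2*pi) + 1/2\<rfloor>"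

definition R_sqrt2pi :: "real^2 \<Rightarrow> real^2" where
  "R_sqrt2pi v = (\<chi> i. modred (v $ i))"

definition data_part :: "real^4 \<Rightarrow> real^2" where
  "data_part x = vec2 (x $ 1) (x $ 2)"

definition anc_part :: "real^4 \<Rightarrow> real^2" where
  "anc_part x = vec2 (x $ 3) (x $ 4)"

definition gauss4 :: "real \<Rightarrow> (real^4) measure" where
  "gauss4 \<sigma> = density lborel (\<lambda>\<xi>. ennreal (\<Prod>i\<in>UNIV. normal_density 0 \<sigma> (\<xi> $ i)))"

definition residual :: "real^4^4 \<Rightarrow> real^2^2 \<Rightarrow> (real^2 \<Rightarrow> real^2) \<Rightarrow> real^4 \<Rightarrow> real^2" where
  "residual Senc M f \<xi> =
     (let x = matrix_inv Senc *v \<xi>;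
          s = R_sqrt2pi ((transpose M ** Omega1) *v anc_part x)
      in data_part x - f s)"

definition V_out :: "real \<Rightarrow> real^4^4 \<Rightarrow> real^2^2 \<Rightarrow> (real^2 \<Rightarrow> real^2) \<Rightarrow> real^2^2" where
  "V_out \<sigma> Senc M f =
     (\<chi> i j. integral\<^sup>L (gauss4 \<sigma>) (\<lambda>\<xi>. residual Senc M f \<xi> $ i * residual Senc M f \<xi> $ j))"

definition gm_error :: "real \<Rightarrow> real^4^4 \<Rightarrow> real^2^2 \<Rightarrow> (real^2 \<Rightarrow> real^2) \<Rightarrow> ereal" where
  "gm_error \<sigma> Senc M f =
     (if (\<forall>i. integrable (gauss4 \<sigma>) (\<lambda>\<xi>. (residual Senc M f \<xi> $ i)^2))
      then ereal (sqrt (det (V_out \<sigma> Senc M f)))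
      else \<infinity>)"

end

theory Submission
  imports Defs
begin


lemmas M2 = vec_eq_iff forall_2 matrix_matrix_mult_def sum_2 transpose_def mat_def
   Omega1_def mat2_def vec2_def det_2 matrix_vector_mult_def

definition Zm :: "real^2^2" where "Zm = mat2 1 0 0 (-1)"
definition adj2 :: "real^2^2 \<Rightarrow> real^2^2" where
  "adj2 X = mat2 (X$2$2) (-X$1$2) (-X$2$1) (X$1$1)"

lemma sand1: "X ** Omega1 ** transpose X = det X *\<^sub>R Omega1"
  by (simp add: M2 algebra_simps)
lemma sand2: "transpose X ** Omega1 ** X = det X *\<^sub>R Omega1"
  by (simp add: M2 algebra_simps)
lemma adj2_r: "X ** adj2 X = det X *\<^sub>R mat 1"
  by (auto simp add: M2 adj2_def algebra_simps)
lemma adj2_l: "adj2 X ** X = det X *\<^sub>R mat 1"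
  by (auto simp add: M2 adj2_def algebra_simps)
lemma det_adj2: "det (adj2 X) = det X"
  by (simp add: M2 adj2_def algebra_simps)
lemma sympl2_iff: "symplectic2 X \<longleftrightarrow> det X = 1"
proof -
  have "Omega1 $ 1 $ 2 = 1" by (simp add: M2)
  then show ?thesis unfolding symplectic2_def sand1
    by (auto simp: vec_eq_iff forall_2)
qed
lemma det_neg2: "det (- (X::real^2^2)) = det X"
  by (simp add: M2)
lemma det_scale2: "det (c *\<^sub>R (X::real^2^2)) = c^2 * det X"
  by (simp add: M2 power2_eq_square algebra_simps)
lemma Om_Om: "Omega1 ** Omega1 = - mat 1"
  by (simp add: M2)
lemma Om_T: "transpose Omega1 = - Omega1"
  by (simp add: M2)


lemma chol:
  fixes P :: "real^2^2"
  assumes sym: "transpose P = P" and p: "P$1$1 > 0" and d: "det P > 0"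
  shows "\<exists>A0. det A0 = 1 \<and> P = sqrt (det P) *\<^sub>R (A0 ** transpose A0)"
proof -
  define a where "a = sqrt (det P)"
  have a: "a > 0" "a^2 = det P" using d by (auto simp: a_def)
  define p where "p = P$1$1"
  define r where "r = P$1$2"
  define q where "q = P$2$2"
  have r2: "P$2$1 = r" proof -
    have "transpose P $ 1 $ 2 = P $ 1 $ 2" using sym by simp
    then show ?thesis by (simp add: transpose_def r_def)
  qed
  have dP: "det P = p*q - r*r" by (simp add: det_2 p_def q_def r_def r2)
  define A0 where "A0 = mat2 (sqrt (p/a)) 0 (r / sqrt (p*a)) (sqrt (a/p))"
  have pp: "p > 0" using p p_def by simp
  have s1: "sqrt (p/a) * sqrt (a/p) = 1" using pp a
    by (simp add: real_sqrt_mult[symmetric])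
  have s2: "sqrt (p/a) * sqrt (p/a) = p/a" using pp a by simp
  have s3: "sqrt (a/p) * sqrt (a/p) = a/p" using pp a by simp
  have s4: "sqrt (p*a) * sqrt (p*a) = p*a" using pp a by simp
  have s5: "sqrt (p/a) / sqrt (p*a) = 1/a"
  proof -
    have "(p/a)/(p*a) = (1/a)^2" using pp a(1) by (simp add: field_simps power2_eq_square)
    hence "sqrt ((p/a)/(p*a)) = 1/a" using a(1) by simp
    thus ?thesis by (simp only: real_sqrt_divide)
  qed
  define u where "u = sqrt (p/a)"
  define v where "v = r / sqrt (p*a)"
  define w where "w = sqrt (a/p)"
  have A0u: "A0 = mat2 u 0 v w" unfolding A0_def u_def v_def w_def ..
  have gen: "\<And>u v w. a *\<^sub>R (mat2 u 0 v w ** transpose (mat2 u 0 v w)) = mat2 (a*(u * u)) (a*(u * v)) (a*(u * v)) (a*(v * v+w * w))"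
    by (simp add: M2 algebra_simps)
  have Pm: "P = mat2 p r r q" using r2 by (simp add: M2 p_def q_def r_def)
  have "det A0 = 1" using s1 by (simp add: A0u M2 u_def w_def)
  moreover have "P = a *\<^sub>R (A0 ** transpose A0)"
  proof -
    have e11: "a * (u * u) = p" using s2 a unfolding u_def by simp
    have e12: "a * (u * v) = r"
    proof -
      have "a * (u * v) = a * r * (sqrt (p/a) / sqrt (p*a))" by (simp add: u_def v_def)
      also have "\<dots> = r" using s5 a by simp
      finally show ?thesis .
    qed
    have e22: "a * (v * v + w * w) = q"
    proof -
      have "v * v = r*r/(p*a)" using s4 by (simp add: v_def field_simps)
      then have "a * (v * v + w * w) = a*(r*r/(p*a) + a/p)"
        using s3 by (simp add: w_def)
      also have "\<dots> = (r*r + a^2)/p" using pp a by (simp add: field_simps power2_eq_square)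
      also have "\<dots> = q" using a dP pp by (simp add: field_simps)
      finally show ?thesis .
    qed
    show ?thesis unfolding A0u gen e11 e12 e22 Pm ..
  qed
  ultimately show ?thesis unfolding a_def by blast
qed


lemma key_id:
  fixes X Y K :: "real^2^2"
  assumes "det X = 1" "det Y = 1"
  shows "(X ** transpose X) ** Omega1 ** (X ** K ** transpose Y) + (X ** K ** transpose Y) ** Omega1 ** (Y ** transpose Y)
     = X ** (Omega1 ** K + K ** Omega1) ** transpose Y"
proof -
  have sx: "transpose X ** Omega1 ** X = Omega1" using sand2[of X] assms by simp
  have sy: "transpose Y ** Omega1 ** Y = Omega1" using sand2[of Y] assms by simp
  have 1: "(X ** transpose X) ** Omega1 ** (X ** K ** transpose Y) = X ** (transpose X ** Omega1 ** X) ** K ** transpose Y"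
    by (simp add: matrix_mul_assoc)
  have 2: "(X ** K ** transpose Y) ** Omega1 ** (Y ** transpose Y) = X ** K ** (transpose Y ** Omega1 ** Y) ** transpose Y"
    by (simp add: matrix_mul_assoc)
  have 3: "X ** (Omega1 ** K + K ** Omega1) ** transpose Y = X ** Omega1 ** K ** transpose Y + X ** K ** Omega1 ** transpose Y"
    by (simp add: matrix_add_ldistrib matrix_mul_assoc M2 algebra_simps)
  show ?thesis unfolding 1 2 3 sx sy by (simp add: matrix_mul_assoc)
qed

lemma cancel_sides:
  fixes X Y N :: "real^2^2"
  assumes "det X = 1" "det Y = 1" "X ** N ** transpose Y = 0"
  shows "N = 0"
proof -
  have "adj2 X ** (X ** N ** transpose Y) ** transpose (adj2 Y) = (adj2 X ** X) ** N ** (transpose (adj2 Y ** Y))"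
    by (simp add: matrix_mul_assoc matrix_transpose_mul)
  also have "\<dots> = N" using assms by (simp add: adj2_l)
  finally show ?thesis using assms(3) by simp
qed


lemma sc_l: "(k *\<^sub>R (A::real^'n^'m)) ** B = k *\<^sub>R (A ** B)"
  by (simp add: scalar_matrix_assoc)
lemma sc_r: "(A::real^'n^'m) ** (k *\<^sub>R B) = k *\<^sub>R (A ** B)"
  by (simp add: matrix_matrix_mult_def vec_eq_iff sum_distrib_left mult_ac)

lemma rot_exists:
  fixes x y :: real
  shows "\<exists>R::real^2^2. transpose R ** R = mat 1 \<and> det R = 1 \<and> R ** mat2 x y y (-x) = sqrt (x^2+y^2) *\<^sub>R Zm"
proof (cases "x^2 + y^2 = 0")
  case True
  then have "x = 0" "y = 0" by (auto simp: sum_power2_eq_zero_iff)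
  then show ?thesis by (intro exI[of _ "mat 1"]) (simp add: M2 Zm_def)
next
  case False
  define r where "r = sqrt (x^2+y^2)"
  have pos: "x^2+y^2 > 0" using False by (simp add: add_nonneg_nonneg less_le)
  have r: "r > 0" "r*r = x^2+y^2" using pos by (auto simp: r_def)
  have rr: "x*x/(r*r) + y*y/(r*r) = 1" proof -
    have "x*x/(r*r) + y*y/(r*r) = (x*x+y*y)/(r*r)" by (simp add: add_divide_distrib)
    also have "\<dots> = 1"
    proof -
      have "x*x+y*y = r*r" using r(2) by (simp add: power2_eq_square)
      then show ?thesis using r(1) by simp
    qed
    finally show ?thesis .
  qed
  define R where "R = mat2 (x/r) (y/r) (-y/r) (x/r)"
  have "transpose R ** R = mat 1" using rr by (simp add: R_def M2 field_simps)
  moreover have "det R = 1" using rr by (simp add: R_def M2 field_simps)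
  moreover have "R ** mat2 x y y (-x) = r *\<^sub>R Zm"
    using r by (simp add: R_def M2 Zm_def field_simps power2_eq_square)
  ultimately show ?thesis unfolding r_def by blast
qed

lemma normal_form:
  fixes P Q C :: "real^2^2"
  assumes Ps: "transpose P = P" and Pp: "P$1$1 > 0" "det P > 0"
    and Qs: "transpose Q = Q" and Qp: "Q$1$1 > 0" "det Q > 0"
    and e1: "P ** Omega1 ** P + C ** Omega1 ** transpose C = Omega1"
    and e2: "P ** Omega1 ** C + C ** Omega1 ** Q = 0"
    and e3: "transpose C ** Omega1 ** C + Q ** Omega1 ** Q = Omega1"
  shows "\<exists>A B G. det A = 1 \<and> det B = 1 \<and> G \<ge> 1 \<and> P = (2*G-1) *\<^sub>R (A ** transpose A) \<and>
     Q = (2*G-1) *\<^sub>R (B ** transpose B) \<and> C = (-2 * sqrt(G*(G-1))) *\<^sub>R (A ** Zm ** transpose B)"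
proof -
  have o12: "Omega1 $ 1 $ 2 = 1" by (simp add: M2)
  have "P ** Omega1 ** P = det P *\<^sub>R Omega1" using sand1[of P] Ps by simp
  moreover have "C ** Omega1 ** transpose C = det C *\<^sub>R Omega1" by (rule sand1)
  ultimately have "(det P *\<^sub>R Omega1 + det C *\<^sub>R Omega1) $ 1 $ 2 = Omega1 $ 1 $ 2" using e1 by simp
  then have dPC: "det P + det C = 1" using o12 by simp
  have "Q ** Omega1 ** Q = det Q *\<^sub>R Omega1" using sand1[of Q] Qs by simp
  moreover have "transpose C ** Omega1 ** C = det C *\<^sub>R Omega1" by (rule sand2)
  ultimately have "(det C *\<^sub>R Omega1 + det Q *\<^sub>R Omega1) $ 1 $ 2 = Omega1 $ 1 $ 2" using e3 by simp
  then have dQC: "det Q + det C = 1" using o12 by simp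
  define a where "a = sqrt (det P)"
  have a: "a > 0" "a*a = det P" using Pp by (auto simp: a_def)
  obtain A0 where A0: "det A0 = 1" "P = a *\<^sub>R (A0 ** transpose A0)"
    using chol[OF Ps Pp] unfolding a_def by blast
  have aQ: "sqrt (det Q) = a" unfolding a_def using dPC dQC by simp
  obtain B0 where B0: "det B0 = 1" "Q = a *\<^sub>R (B0 ** transpose B0)"
    using chol[OF Qs Qp] unfolding aQ by blast
  define C1 where "C1 = adj2 A0 ** C ** transpose (adj2 B0)"
  have hC: "C = A0 ** C1 ** transpose B0"
  proof -
    have "A0 ** C1 ** transpose B0 = (A0 ** adj2 A0) ** C ** transpose (B0 ** adj2 B0)"
      by (simp add: C1_def matrix_mul_assoc matrix_transpose_mul)
    also have "\<dots> = C" using A0 B0 by (simp add: adj2_r)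
    finally show ?thesis by simp
  qed
  have "a *\<^sub>R (A0 ** (Omega1 ** C1 + C1 ** Omega1) ** transpose B0) = 0"
  proof -
    have "a *\<^sub>R (A0 ** (Omega1 ** C1 + C1 ** Omega1) ** transpose B0) =
      a *\<^sub>R ((A0 ** transpose A0) ** Omega1 ** (A0 ** C1 ** transpose B0) + (A0 ** C1 ** transpose B0) ** Omega1 ** (B0 ** transpose B0))"
      using key_id[OF A0(1) B0(1), of C1] by simp
    also have "\<dots> = P ** Omega1 ** C + C ** Omega1 ** Q"
      unfolding A0(2) B0(2) hC
      by (simp add: sc_l sc_r scaleR_right_distrib)
    finally show ?thesis using e2 by simp
  qed
  then have "A0 ** (Omega1 ** C1 + C1 ** Omega1) ** transpose B0 = 0" using a by simp
  then have N: "Omega1 ** C1 + C1 ** Omega1 = 0" using cancel_sides A0(1) B0(1) by blast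
  define x where "x = C1$1$1"
  define y where "y = C1$1$2"
  have C1e: "C1 = mat2 x y y (-x)"
  proof -
    have "(Omega1 ** C1 + C1 ** Omega1) $ 1 $ 1 = 0" "(Omega1 ** C1 + C1 ** Omega1) $ 1 $ 2 = 0"
         "(Omega1 ** C1 + C1 ** Omega1) $ 2 $ 2 = 0"
      using N by simp_all
    then show ?thesis by (simp add: M2 x_def y_def)
  qed
  have dC: "det C = -(x^2+y^2)" unfolding hC det_mul det_transpose A0 B0 C1e
    by (simp add: M2 power2_eq_square)
  have aa: "a*a = 1 + (x^2+y^2)" using a dPC dC by simp
  define \<rho> where "\<rho> = sqrt (x^2+y^2)"
  have \<rho>: "\<rho> \<ge> 0" "\<rho>*\<rho> = x^2+y^2" by (auto simp: \<rho>_def)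
  obtain R where R: "transpose R ** R = mat 1" "det R = 1" "R ** C1 = \<rho> *\<^sub>R Zm"
    using rot_exists[of x y] unfolding C1e \<rho>_def by blast
  define A where "A = A0 ** transpose R"
  define B where "B = - B0"
  define G where "G = (a+1)/2"
  have a1: "a \<ge> 1"
  proof -
    have "1^2 \<le> a^2" using aa by (simp add: power2_eq_square)
    from power2_le_imp_le[OF this] a(1) show ?thesis by simp
  qed
  have G1: "G \<ge> 1" using a1 by (simp add: G_def)
  have G2: "2*G-1 = a" unfolding G_def by (simp add: field_simps)
  have G3: "2 * sqrt(G*(G-1)) = \<rho>"
  proof -
    have "G*(G-1) = (\<rho>/2)^2" using aa \<rho> by (simp add: G_def field_simps power2_eq_square)
    then have "sqrt (G*(G-1)) = \<rho>/2" using \<rho> by simp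
    then show ?thesis by simp
  qed
  have dA: "det A = 1" using A0 R by (simp add: A_def det_mul)
  have dB: "det B = 1" using B0 by (simp add: B_def det_neg2)
  have AA: "A ** transpose A = A0 ** transpose A0"
  proof -
    have "A ** transpose A = A0 ** (transpose R ** R) ** transpose A0"
      by (simp add: A_def matrix_transpose_mul matrix_mul_assoc)
    then show ?thesis using R by simp
  qed
  have BB: "B ** transpose B = B0 ** transpose B0"
    by (simp add: B_def M2)
  have CC: "C = (-\<rho>) *\<^sub>R (A ** Zm ** transpose B)"
  proof -
    have tB: "transpose B = - transpose B0" by (simp add: B_def M2)
    have "C = A0 ** (transpose R ** R) ** C1 ** transpose B0" using R hC by simp
    also have "\<dots> = A0 ** transpose R ** (R ** C1) ** transpose B0" by (simp add: matrix_mul_assoc)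
    also have "\<dots> = \<rho> *\<^sub>R (A ** Zm ** transpose B0)" unfolding R(3) A_def
      by (simp add: sc_l sc_r matrix_mul_assoc)
    also have "\<dots> = (-\<rho>) *\<^sub>R (A ** Zm ** transpose B)" unfolding tB
      by (simp add: M2 algebra_simps)
    finally show ?thesis .
  qed
  show ?thesis
    apply (rule exI[of _ A], rule exI[of _ B], rule exI[of _ G])
    using dA dB G1 A0(2) B0(2) CC AA BB G2 G3 by simp
qed


definition hh :: "4 \<Rightarrow> 2" where "hh i = (if i = 1 \<or> i = 3 then 1 else 2)"
definition up :: "4 \<Rightarrow> bool" where "up i \<longleftrightarrow> i = 1 \<or> i = 2"

definition blk :: "real^2^2 \<Rightarrow> real^2^2 \<Rightarrow> real^2^2 \<Rightarrow> real^2^2 \<Rightarrow> real^4^4" where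
  "blk P Q R S = (\<chi> i j. if up i then (if up j then P$hh i$hh j else Q$hh i$hh j)
                          else (if up j then R$hh i$hh j else S$hh i$hh j))"

lemmas M4 = vec_eq_iff forall_4 forall_2 matrix_matrix_mult_def sum_4 sum_2 transpose_def mat_def
   blk_def hh_def up_def

lemma blk_mult: "blk P Q R S ** blk P' Q' R' S' =
   blk (P**P'+Q**R') (P**Q'+Q**S') (R**P'+S**R') (R**Q'+S**S')"
  by (simp add: M4 algebra_simps)

lemma blk_transpose: "transpose (blk P Q R S) = blk (transpose P) (transpose R) (transpose Q) (transpose S)"
  by (simp add: M4)

lemma blk_eq: "blk P Q R S = blk P' Q' R' S' \<longleftrightarrow> P = P' \<and> Q = Q' \<and> R = R' \<and> S = S'"
  by (auto simp add: M4)

lemma blk_ex: "\<exists>P Q R S. X = blk P Q R S"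
  apply (rule exI[of _ "\<chi> i j. X $ (if i = 1 then 1 else 2) $ (if j = 1 then 1 else 2)"])
  apply (rule exI[of _ "\<chi> i j. X $ (if i = 1 then 1 else 2) $ (if j = 1 then 3 else 4)"])
  apply (rule exI[of _ "\<chi> i j. X $ (if i = 1 then 3 else 4) $ (if j = 1 then 1 else 2)"])
  apply (rule exI[of _ "\<chi> i j. X $ (if i = 1 then 3 else 4) $ (if j = 1 then 3 else 4)"])
  by (simp add: M4)

lemma blk_mat1: "mat 1 = blk (mat 1) 0 0 (mat 1)"
  by (simp add: M4)

lemma blk_Omega2: "Omega2 = blk Omega1 0 0 Omega1"
  by (simp add: M4 Omega2_def mat4_def idx4_def Omega1_def mat2_def vec2_def)

lemma blk_STMS: "S_TMS G = blk (sqrt G *\<^sub>R mat 1) (sqrt (G-1) *\<^sub>R Zm) (sqrt (G-1) *\<^sub>R Zm) (sqrt G *\<^sub>R mat 1)"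
  by (simp add: M4 S_TMS_def mat4_def idx4_def Zm_def mat2_def vec2_def)

lemma blk_neg: "- blk P Q R S = blk (-P) (-Q) (-R) (-S)"
  by (simp add: M4)

lemma blk_scale: "c *\<^sub>R blk P Q R S = blk (c *\<^sub>R P) (c *\<^sub>R Q) (c *\<^sub>R R) (c *\<^sub>R S)"
  by (simp add: M4)

lemma data_blk: "data_part (blk P Q R S *v x) = P *v data_part x + Q *v anc_part x"
  by (simp add: M4 data_part_def anc_part_def vec2_def matrix_vector_mult_def)

lemma anc_blk: "anc_part (blk P Q R S *v x) = R *v data_part x + S *v anc_part x"
  by (simp add: M4 data_part_def anc_part_def vec2_def matrix_vector_mult_def)

lemma matrix_inv_eq:
  fixes A B :: "real^'n^'n"
  assumes "A ** B = mat 1"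
  shows "matrix_inv A = B"
proof -
  have B2: "B ** A = mat 1" using assms matrix_left_right_inverse by blast
  have "A ** matrix_inv A = mat 1 \<and> matrix_inv A ** A = mat 1"
    unfolding matrix_inv_def by (rule someI[of _ B]) (use assms B2 in simp)
  then have "matrix_inv A = (B ** A) ** matrix_inv A" using B2 by simp
  also have "\<dots> = B" using \<open>A ** matrix_inv A = mat 1 \<and> _\<close> by (simp add: matrix_mul_assoc[symmetric])
  finally show ?thesis .
qed

lemma inv_STMS:
  assumes "G \<ge> 1"
  shows "matrix_inv (S_TMS G) = blk (sqrt G *\<^sub>R mat 1) (- sqrt (G-1) *\<^sub>R Zm) (- sqrt (G-1) *\<^sub>R Zm) (sqrt G *\<^sub>R mat 1)"
proof (rule matrix_inv_eq)
  have g: "sqrt G * sqrt G = G" "sqrt (G-1) * sqrt (G-1) = G - 1" using assms by auto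
  show "S_TMS G ** blk (sqrt G *\<^sub>R mat 1) (- sqrt (G-1) *\<^sub>R Zm) (- sqrt (G-1) *\<^sub>R Zm) (sqrt G *\<^sub>R mat 1) = mat 1"
    unfolding blk_STMS blk_mult blk_mat1 blk_eq
    using g by (simp add: M2 Zm_def algebra_simps)
qed


lemma Om2_sq: "Omega2 ** Omega2 = - mat 1"
  unfolding blk_Omega2 blk_mult blk_mat1 blk_neg by (simp add: Om_Om)
lemma transpose_zero: "transpose (0::real^'n^'m) = 0"
  by (simp add: transpose_def vec_eq_iff)
lemma Om2_T: "transpose Omega2 = - Omega2"
  unfolding blk_Omega2 blk_transpose blk_neg by (simp add: Om_T transpose_zero)

lemma neg_mult_l: "(- (A::real^'n^'m)) ** B = - (A ** B)"
  by (simp add: matrix_matrix_mult_def vec_eq_iff sum_negf)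
lemma neg_mult_r: "(A::real^'n^'m) ** (- B) = - (A ** B)"
  by (simp add: matrix_matrix_mult_def vec_eq_iff sum_negf)
lemma transpose_neg: "transpose (- (A::real^'n^'m)) = - transpose A"
  by (simp add: transpose_def vec_eq_iff)

lemma sympl_inv:
  assumes "symplectic4 S"
  shows "S ** matrix_inv S = mat 1" "matrix_inv S ** S = mat 1"
    "matrix_inv S ** Omega2 ** transpose (matrix_inv S) = Omega2"
    "transpose (matrix_inv S) ** Omega2 ** matrix_inv S = Omega2"
proof -
  have s: "S ** Omega2 ** transpose S = Omega2" using assms by (simp add: symplectic4_def)
  define T where "T = - (Omega2 ** transpose S ** Omega2)"
  have "S ** T = - ((S ** Omega2 ** transpose S) ** Omega2)"
    by (simp add: T_def neg_mult_r matrix_mul_assoc)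
  also have "\<dots> = mat 1" using s Om2_sq by simp
  finally have ST: "S ** T = mat 1" .
  then have Ti: "matrix_inv S = T" by (rule matrix_inv_eq)
  have TS: "T ** S = mat 1" using ST matrix_left_right_inverse by blast
  show "S ** matrix_inv S = mat 1" "matrix_inv S ** S = mat 1" using ST TS Ti by simp_all
  have "T ** Omega2 ** transpose T = T ** (S ** Omega2 ** transpose S) ** transpose T" using s by simp
  also have "\<dots> = (T ** S) ** Omega2 ** transpose (T ** S)" by (simp add: matrix_mul_assoc matrix_transpose_mul)
  also have "\<dots> = Omega2" using TS by simp
  finally show "matrix_inv S ** Omega2 ** transpose (matrix_inv S) = Omega2" using Ti by simp
  have tT: "transpose T = - (Omega2 ** S ** Omega2)"
    by (simp add: T_def transpose_neg matrix_transpose_mul Om2_T neg_mult_l neg_mult_r matrix_mul_assoc)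
  have "transpose T ** Omega2 ** T = (- (Omega2 ** S ** Omega2)) ** Omega2 ** (- (Omega2 ** transpose S ** Omega2))"
    by (subst tT) (simp only: T_def)
  also have "\<dots> = Omega2 ** S ** (Omega2 ** Omega2 ** Omega2) ** transpose S ** Omega2"
    by (simp add: neg_mult_l neg_mult_r matrix_mul_assoc)
  also have "\<dots> = - (Omega2 ** (S ** Omega2 ** transpose S) ** Omega2)"
    by (simp add: Om2_sq neg_mult_l neg_mult_r matrix_mul_assoc)
  also have "\<dots> = Omega2" using s Om2_sq by (simp add: neg_mult_l matrix_mul_assoc)
  finally show "transpose (matrix_inv S) ** Omega2 ** matrix_inv S = Omega2" using Ti by simp
qed


lemma pos_block:
  fixes T1 T2 :: "real^2^2"
  assumes h: "T1 ** Omega1 ** transpose T1 + T2 ** Omega1 ** transpose T2 = Omega1"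
  shows "(T1 ** transpose T1 + T2 ** transpose T2)$1$1 > 0" "det (T1 ** transpose T1 + T2 ** transpose T2) > 0"
    "transpose (T1 ** transpose T1 + T2 ** transpose T2) = T1 ** transpose T1 + T2 ** transpose T2"
proof -
  define P where "P = T1 ** transpose T1 + T2 ** transpose T2"
  have o12: "Omega1 $ 1 $ 2 = 1" by (simp add: M2)
  have "(det T1 *\<^sub>R Omega1 + det T2 *\<^sub>R Omega1) $ 1 $ 2 = Omega1 $ 1 $ 2" using h by (simp add: sand1)
  then have d: "det T1 + det T2 = 1" using o12 by simp
  have lag: "det P = (det T1)^2 + (det T2)^2 + (T1$1$1 * T2$2$1 - T2$1$1 * T1$2$1)^2
     + (T1$1$1 * T2$2$2 - T2$1$2 * T1$2$1)^2 + (T1$1$2 * T2$2$1 - T2$1$1 * T1$2$2)^2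
     + (T1$1$2 * T2$2$2 - T2$1$2 * T1$2$2)^2"
    by (simp add: P_def M2 power2_eq_square algebra_simps)
  have "(det T1)^2 + (det T2)^2 > 0"
  proof (rule ccontr)
    assume "\<not> ?thesis"
    then have "det T1 = 0 \<and> det T2 = 0" by (simp add: not_less sum_power2_le_zero_iff)
    then show False using d by simp
  qed
  then have dP: "det P > 0" unfolding lag by (smt (verit) zero_le_power2)
  have sym: "transpose P = P" by (simp add: P_def M2 algebra_simps)
  have P12: "P$2$1 = P$1$2" by (simp add: P_def M2 algebra_simps)
  have p11: "P$1$1 \<ge> 0" "P$2$2 \<ge> 0" by (simp_all add: P_def M2 algebra_simps)
  have "P$1$1 \<noteq> 0"
  proof
    assume "P$1$1 = 0"
    then have "det P = - (P$1$2 * P$1$2)" by (simp add: det_2 P12)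
    then show False using dP by (smt (verit) zero_le_square)
  qed
  then show "P$1$1 > 0" using p11 by simp
  show "det P > 0" "transpose P = P" using dP sym by auto
qed

lemma tms_orth:
  fixes gq hq G :: real
  assumes a: "gq*gq = G" "hq*hq = G-1"
  shows "blk (gq *\<^sub>R mat 1) (hq *\<^sub>R Zm) (hq *\<^sub>R Zm) (gq *\<^sub>R mat 1) **
     blk ((2*G-1) *\<^sub>R mat 1) ((-2*(gq*hq)) *\<^sub>R Zm) ((-2*(gq*hq)) *\<^sub>R Zm) ((2*G-1) *\<^sub>R mat 1) **
     blk (gq *\<^sub>R mat 1) (hq *\<^sub>R Zm) (hq *\<^sub>R Zm) (gq *\<^sub>R mat 1) = mat 1"
proof -
  have e1: "(2*G-1)*(gq*gq+hq*hq) - 4*(gq*gq)*(hq*hq) = 1" unfolding a by (simp add: algebra_simps)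
  have e2: "2*gq*hq*((2*G-1) - (gq*gq+hq*hq)) = 0" unfolding a by simp
  have e2n: "2*gq*hq*((gq*gq+hq*hq) - (2*G-1)) = 0" unfolding a by simp
  have f1: "(gq * (2 * G - 1) - hq * (2 * (gq * hq))) * gq + (hq * (2 * G - 1) - gq * (2 * (gq * hq))) * hq = 1"
    by (rule trans[OF _ e1]) (simp add: algebra_simps)
  have f2: "(gq * (2 * G - 1) - hq * (2 * (gq * hq))) * gq - (gq * (2 * (gq * hq)) - hq * (2 * G - 1)) * hq = 1"
    by (rule trans[OF _ e1]) (simp add: algebra_simps)
  have f3: "(gq * (2 * G - 1) - hq * (2 * (gq * hq))) * hq + (hq * (2 * G - 1) - gq * (2 * (gq * hq))) * gq = 0"
    by (rule trans[OF _ e2]) (simp add: algebra_simps)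
  have f4: "(gq * (2 * (gq * hq)) - hq * (2 * G - 1)) * gq = (gq * (2 * G - 1) - hq * (2 * (gq * hq))) * hq"
    by (rule eq_iff_diff_eq_0[THEN iffD2, OF trans[OF _ e2n]]) (simp add: algebra_simps)
  have f5: "(hq * (2 * G - 1) - gq * (2 * (gq * hq))) * gq + (gq * (2 * G - 1) - hq * (2 * (gq * hq))) * hq = 0"
    by (rule trans[OF _ e2]) (simp add: algebra_simps)
  have f6: "(hq * (2 * G - 1) - gq * (2 * (gq * hq))) * hq + (gq * (2 * G - 1) - hq * (2 * (gq * hq))) * gq = 1"
    by (rule trans[OF _ e1]) (simp add: algebra_simps)
  show ?thesis
    unfolding blk_mult blk_mat1 blk_eq
    apply (simp add: M2 Zm_def)
    using f1 f2 f3 f4 f5 f6 by blast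
qed


lemma STMS_T: "transpose (S_TMS G) = S_TMS G"
  by (simp add: M4 S_TMS_def mat4_def idx4_def)


lemma transpose_add: "transpose ((A::real^'n^'m) + B) = transpose A + transpose B"
  by (simp add: transpose_def vec_eq_iff)

lemma conj_id:
  fixes A :: "real^2^2"
  assumes "det A = 1"
  shows "adj2 A ** (k *\<^sub>R (A ** transpose A)) ** transpose (adj2 A) = k *\<^sub>R mat 1"
proof -
  have "adj2 A ** (k *\<^sub>R (A ** transpose A)) ** transpose (adj2 A) = k *\<^sub>R ((adj2 A ** A) ** transpose (adj2 A ** A))"
    by (simp add: sc_l sc_r matrix_mul_assoc matrix_transpose_mul)
  then show ?thesis using assms by (simp add: adj2_l)
qed

lemma conj_id2:
  fixes A B :: "real^2^2"
  assumes "det A = 1" "det B = 1"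
  shows "adj2 A ** (k *\<^sub>R (A ** Zm ** transpose B)) ** transpose (adj2 B) = k *\<^sub>R Zm"
proof -
  have "adj2 A ** (k *\<^sub>R (A ** Zm ** transpose B)) ** transpose (adj2 B) = k *\<^sub>R ((adj2 A ** A) ** Zm ** transpose (adj2 B ** B))"
    by (simp add: sc_l sc_r matrix_mul_assoc matrix_transpose_mul)
  then show ?thesis using assms by (simp add: adj2_l)
qed

lemma decomp:
  assumes "symplectic4 S"
  shows "\<exists>A B G Ot. det A = 1 \<and> det B = 1 \<and> G \<ge> 1 \<and> transpose Ot ** Ot = mat 1 \<and>
            matrix_inv S = blk A 0 0 B ** matrix_inv (S_TMS G) ** Ot"
proof -
  define T where "T = matrix_inv S"
  have tO: "T ** Omega2 ** transpose T = Omega2" "transpose T ** Omega2 ** T = Omega2"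
    using sympl_inv[OF assms] unfolding T_def by auto
  obtain T1 T2 T3 T4 where Tb: "T = blk T1 T2 T3 T4" using blk_ex by blast
  have "blk (T1 ** Omega1 ** transpose T1 + T2 ** Omega1 ** transpose T2) (T1 ** Omega1 ** transpose T3 + T2 ** Omega1 ** transpose T4)
            (T3 ** Omega1 ** transpose T1 + T4 ** Omega1 ** transpose T2) (T3 ** Omega1 ** transpose T3 + T4 ** Omega1 ** transpose T4)
        = blk Omega1 0 0 Omega1"
    using tO(1) unfolding Tb blk_Omega2 blk_transpose blk_mult by simp
  then have h1: "T1 ** Omega1 ** transpose T1 + T2 ** Omega1 ** transpose T2 = Omega1"
    and h2: "T3 ** Omega1 ** transpose T3 + T4 ** Omega1 ** transpose T4 = Omega1"
    unfolding blk_eq by auto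
  define P where "P = T1 ** transpose T1 + T2 ** transpose T2"
  define Q where "Q = T3 ** transpose T3 + T4 ** transpose T4"
  define C where "C = T1 ** transpose T3 + T2 ** transpose T4"
  note pP = pos_block[OF h1, folded P_def]
  note pQ = pos_block[OF h2, folded Q_def]
  have Vb: "T ** transpose T = blk P C (transpose C) Q"
    unfolding Tb blk_transpose blk_mult P_def Q_def C_def
    by (simp add: matrix_transpose_mul transpose_add)
  have "(T ** transpose T) ** Omega2 ** (T ** transpose T) = T ** (transpose T ** Omega2 ** T) ** transpose T"
    by (simp add: matrix_mul_assoc)
  also have "\<dots> = Omega2" using tO by simp
  finally have "blk P C (transpose C) Q ** blk Omega1 0 0 Omega1 ** blk P C (transpose C) Q = blk Omega1 0 0 Omega1"
    unfolding Vb blk_Omega2 .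
  then have "blk (P ** Omega1 ** P + C ** Omega1 ** transpose C) (P ** Omega1 ** C + C ** Omega1 ** Q)
     (transpose C ** Omega1 ** P + Q ** Omega1 ** transpose C) (transpose C ** Omega1 ** C + Q ** Omega1 ** Q) = blk Omega1 0 0 Omega1"
    unfolding blk_mult by simp
  then have e1: "P ** Omega1 ** P + C ** Omega1 ** transpose C = Omega1"
    and e2: "P ** Omega1 ** C + C ** Omega1 ** Q = 0"
    and e3: "transpose C ** Omega1 ** C + Q ** Omega1 ** Q = Omega1"
    unfolding blk_eq by auto
  obtain A B G where AB: "det A = 1" "det B = 1" "G \<ge> 1"
    and PA: "P = (2*G-1) *\<^sub>R (A ** transpose A)" and QB: "Q = (2*G-1) *\<^sub>R (B ** transpose B)"
    and CA: "C = (-2 * sqrt(G*(G-1))) *\<^sub>R (A ** Zm ** transpose B)"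
    using normal_form[OF pP(3) pP(1) pP(2) pQ(3) pQ(1) pQ(2) e1 e2 e3] by blast
  define Sg where "Sg = S_TMS G"
  define Si where "Si = matrix_inv Sg"
  have SiS: "Si ** Sg = mat 1" "Sg ** Si = mat 1"
  proof -
    have "Sg ** blk (sqrt G *\<^sub>R mat 1) (- sqrt (G-1) *\<^sub>R Zm) (- sqrt (G-1) *\<^sub>R Zm) (sqrt G *\<^sub>R mat 1) = mat 1"
    proof -
      have g: "sqrt G * sqrt G = G" "sqrt (G-1) * sqrt (G-1) = G - 1" using AB by auto
      show ?thesis unfolding Sg_def blk_STMS blk_mult blk_mat1 blk_eq
        using g by (simp add: M2 Zm_def algebra_simps)
    qed
    moreover have "Si = blk (sqrt G *\<^sub>R mat 1) (- sqrt (G-1) *\<^sub>R Zm) (- sqrt (G-1) *\<^sub>R Zm) (sqrt G *\<^sub>R mat 1)"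
      unfolding Si_def Sg_def using inv_STMS[OF AB(3)] .
    ultimately show "Sg ** Si = mat 1" by simp
    then show "Si ** Sg = mat 1" using matrix_left_right_inverse by blast
  qed
  define D where "D = blk (adj2 A) 0 0 (adj2 B)"
  define Ot where "Ot = Sg ** D ** T"
  have W: "D ** (T ** transpose T) ** transpose D = blk ((2*G-1) *\<^sub>R mat 1) ((-2 * sqrt(G*(G-1))) *\<^sub>R Zm)
       ((-2 * sqrt(G*(G-1))) *\<^sub>R Zm) ((2*G-1) *\<^sub>R mat 1)"
  proof -
    have tC: "transpose C = (-2 * sqrt(G*(G-1))) *\<^sub>R (B ** Zm ** transpose A)"
      unfolding CA by (simp add: transpose_scalar matrix_transpose_mul matrix_mul_assoc Zm_def M2)
    show ?thesis
      unfolding Vb D_def blk_transpose blk_mult tC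
      using conj_id[OF AB(1), of "2*G-1"] conj_id[OF AB(2), of "2*G-1"]
        conj_id2[OF AB(1) AB(2), of "-2 * sqrt(G*(G-1))"] conj_id2[OF AB(2) AB(1), of "-2 * sqrt(G*(G-1))"]
      by (simp add: transpose_zero PA QB CA)
  qed
  have "Ot ** transpose Ot = Sg ** (D ** (T ** transpose T) ** transpose D) ** transpose Sg"
    by (simp add: Ot_def matrix_transpose_mul matrix_mul_assoc)
  also have "\<dots> = mat 1"
  proof -
    have g: "sqrt G * sqrt G = G" "sqrt (G-1) * sqrt (G-1) = G - 1" using AB by auto
    have g2: "sqrt (G*(G-1)) = sqrt G * sqrt (G-1)" by (simp add: real_sqrt_mult)
    show ?thesis unfolding W Sg_def STMS_T unfolding blk_STMS g2
      by (rule tms_orth[OF g])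
  qed
  finally have "Ot ** transpose Ot = mat 1" .
  then have Oo: "transpose Ot ** Ot = mat 1" using matrix_left_right_inverse by blast
  have "blk A 0 0 B ** Si ** Ot = blk A 0 0 B ** (Si ** Sg) ** D ** T"
    by (simp add: Ot_def matrix_mul_assoc)
  also have "\<dots> = blk (A ** adj2 A) 0 0 (B ** adj2 B) ** T"
    using SiS by (simp add: D_def blk_mult)
  also have "\<dots> = T" using AB by (simp add: adj2_r blk_mat1[symmetric])
  finally have "T = blk A 0 0 B ** matrix_inv (S_TMS G) ** Ot" by (simp add: Si_def Sg_def)
  then show ?thesis using AB Oo unfolding T_def by blast
qed


lemma vec_nth_meas[measurable]: "(\<lambda>x::real^'n. x $ i) \<in> borel_measurable borel"
  by (intro borel_measurable_continuous_onI continuous_intros)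

lemma vec_lambda_meas[measurable]:
  fixes f :: "'a \<Rightarrow> 'n::finite \<Rightarrow> real"
  assumes [measurable]: "\<And>i. (\<lambda>x. f x i) \<in> borel_measurable M"
  shows "(\<lambda>x. \<chi> i. f x i) \<in> borel_measurable M"
proof (subst borel_measurable_euclidean_space, intro ballI)
  fix b :: "real^'n" assume "b \<in> Basis"
  then obtain i where b: "b = axis i 1" by (auto simp: Basis_vec_def)
  have "(\<lambda>x. (\<chi> i. f x i) \<bullet> b) = (\<lambda>x. f x i)" unfolding b by (simp add: inner_axis)
  then show "(\<lambda>x. (\<chi> i. f x i) \<bullet> b) \<in> borel_measurable M" by simp
qed

lemma modred_meas[measurable]: "modred \<in> borel_measurable borel"
  unfolding modred_def by measurable

lemma R_meas[measurable]: "R_sqrt2pi \<in> borel_measurable borel"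
  unfolding R_sqrt2pi_def by measurable

lemma mv_meas[measurable]: "(\<lambda>x. (A::real^'n^'m) *v x) \<in> borel_measurable borel"
  by (intro borel_measurable_continuous_onI linear_continuous_on) simp

lemma data_meas[measurable]: "data_part \<in> borel_measurable borel"
  unfolding data_part_def vec2_def by measurable
lemma anc_meas[measurable]: "anc_part \<in> borel_measurable borel"
  unfolding anc_part_def vec2_def by measurable

lemma residual_meas:
  assumes [measurable]: "f \<in> borel_measurable borel"
  shows "residual Senc M f \<in> borel_measurable borel"
  unfolding residual_def Let_def by measurable


lemma orth_facts:
  fixes Ot :: "real^4^4"
  assumes "transpose Ot ** Ot = mat 1"
  shows "orthogonal_transformation (\<lambda>x. Ot *v x)" "orthogonal_transformation (\<lambda>x. transpose Ot *v x)"
    "\<And>x. transpose Ot *v (Ot *v x) = x" "\<And>x. Ot *v (transpose Ot *v x) = x"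
proof -
  have om: "orthogonal_matrix Ot" using assms by (simp add: orthogonal_matrix)
  have om2: "orthogonal_matrix (transpose Ot)" using om by simp
  show "orthogonal_transformation (\<lambda>x. Ot *v x)"
    unfolding orthogonal_transformation_matrix matrix_of_matrix_vector_mul using om by simp
  show "orthogonal_transformation (\<lambda>x. transpose Ot *v x)"
    unfolding orthogonal_transformation_matrix matrix_of_matrix_vector_mul using om2 by simp
  have o2: "Ot ** transpose Ot = mat 1" using assms matrix_left_right_inverse by blast
  show "\<And>x. transpose Ot *v (Ot *v x) = x" using assms by (simp add: matrix_vector_mul_assoc)
  show "\<And>x. Ot *v (transpose Ot *v x) = x" using o2 by (simp add: matrix_vector_mul_assoc del: transpose_matrix_vector)
qed

lemma lebesgue_lborel_emeasure: "S \<in> sets borel \<Longrightarrow> emeasure lebesgue S = emeasure lborel S"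
  by simp

lemma lborel_orth:
  fixes Ot :: "real^4^4"
  assumes "transpose Ot ** Ot = mat 1"
  shows "distr lborel borel (\<lambda>x. Ot *v x) = lborel"
proof (rule lborel_eqI[symmetric])
  note of = orth_facts[OF assms]
  fix l u :: "real^4"
  assume le: "\<And>b. b \<in> Basis \<Longrightarrow> l \<bullet> b \<le> u \<bullet> b"
  have pre: "(\<lambda>x. Ot *v x) -` box l u = (\<lambda>x. transpose Ot *v x) ` box l u"
    using of(3,4) by (auto simp: image_iff) (metis of(3))
  have bb: "box l u \<in> sets borel" by simp
  have pb: "(\<lambda>x. Ot *v x) -` box l u \<in> sets borel"
    using measurable_sets[OF mv_meas bb, of Ot] by simp
  have fin: "emeasure lborel (box l u) < \<infinity>" using emeasure_lborel_box_finite[of l u] by simp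
  have bl: "box l u \<in> lmeasurable" using bb fin
    by (intro fmeasurableI) auto
  have il: "(\<lambda>x. transpose Ot *v x) ` box l u \<in> lmeasurable"
    by (rule measurable_orthogonal_image[OF of(2) bl])
  have "emeasure (distr lborel borel (\<lambda>x. Ot *v x)) (box l u) = emeasure lborel ((\<lambda>x. Ot *v x) -` box l u)"
    by (simp add: emeasure_distr)
  also have "\<dots> = emeasure lebesgue ((\<lambda>x. transpose Ot *v x) ` box l u)"
    using pb pre by simp
  also have "\<dots> = measure lebesgue ((\<lambda>x. transpose Ot *v x) ` box l u)"
    using il by (simp add: emeasure_eq_measure2)
  also have "\<dots> = measure lebesgue (box l u)"
    using measure_orthogonal_image[OF of(2) bl] by simp
  also have "\<dots> = emeasure lebesgue (box l u)" using bl by (simp add: emeasure_eq_measure2)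
  also have "\<dots> = emeasure lborel (box l u)" by simp
  also have "\<dots> = (\<Prod>b\<in>Basis. (u - l) \<bullet> b)" using le by (simp add: emeasure_lborel_box_eq)
  finally show "emeasure (distr lborel borel (\<lambda>x. Ot *v x)) (box l u) = (\<Prod>b\<in>Basis. (u - l) \<bullet> b)" .
qed simp


lemma prod_nd: "(\<Prod>i\<in>UNIV. normal_density 0 \<sigma> ((y::real^4) $ i)) =
   (1 / sqrt (2 * pi * \<sigma>\<^sup>2)) ^ CARD(4) * exp (- (y \<bullet> y) / (2 * \<sigma>\<^sup>2))"
proof -
  have "(\<Prod>i\<in>UNIV. normal_density 0 \<sigma> (y $ i)) = (\<Prod>i\<in>UNIV. (1 / sqrt (2 * pi * \<sigma>\<^sup>2)) * exp (- (y$i)\<^sup>2 / (2 * \<sigma>\<^sup>2)))"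
    by (simp add: normal_density_def)
  also have "\<dots> = (1 / sqrt (2 * pi * \<sigma>\<^sup>2)) ^ CARD(4) * exp (\<Sum>i\<in>UNIV. - (y$i)\<^sup>2 / (2 * \<sigma>\<^sup>2))"
    unfolding prod.distrib prod_constant by (simp add: exp_sum)
  also have "(\<Sum>i\<in>UNIV. - (y$i)\<^sup>2 / (2 * \<sigma>\<^sup>2)) = - (y \<bullet> y) / (2 * \<sigma>\<^sup>2)"
    by (simp add: inner_vec_def power2_eq_square sum_divide_distrib[symmetric] sum_negf)
  finally show ?thesis .
qed

lemma gauss_orth:
  assumes o: "transpose Ot ** Ot = mat 1"
  shows "distr (gauss4 \<sigma>) borel (\<lambda>x. (Ot::real^4^4) *v x) = gauss4 \<sigma>"
proof -
  note of = orth_facts[OF o]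
  define \<rho> where "\<rho> = (\<lambda>\<xi>::real^4. ennreal (\<Prod>i\<in>UNIV. normal_density 0 \<sigma> (\<xi> $ i)))"
  have g: "gauss4 \<sigma> = density lborel \<rho>" unfolding gauss4_def \<rho>_def ..
  have \<rho>m[measurable]: "\<rho> \<in> borel_measurable borel" unfolding \<rho>_def by measurable
  have inv: "\<rho> (Ot *v x) = \<rho> x" for x
  proof -
    have "(Ot *v x) \<bullet> (Ot *v x) = x \<bullet> x" using of(1) by (simp add: orthogonal_transformation_def)
    then show ?thesis unfolding \<rho>_def prod_nd by simp
  qed
  have hm[measurable]: "(\<lambda>x. Ot *v x) \<in> borel_measurable borel" by measurable
  show ?thesis
  proof (rule measure_eqI)
    show "sets (distr (gauss4 \<sigma>) borel (\<lambda>x. Ot *v x)) = sets (gauss4 \<sigma>)" by (simp add: g)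
    fix A assume "A \<in> sets (distr (gauss4 \<sigma>) borel (\<lambda>x. Ot *v x))"
    then have A[measurable]: "A \<in> sets borel" by simp
    have hl: "(\<lambda>x. Ot *v x) \<in> measurable lborel borel" using hm by simp
    have hd: "(\<lambda>x. Ot *v x) \<in> measurable (density lborel \<rho>) borel" using hl by simp
    have pre: "(\<lambda>x. Ot *v x) -` A \<in> sets lborel" using measurable_sets[OF hl A] by simp
    have \<rho>l: "\<rho> \<in> borel_measurable lborel" using \<rho>m by simp
    have Al: "A \<in> sets lborel" using A by simp
    have Fm: "(\<lambda>y. \<rho> y * indicator A y) \<in> borel_measurable borel" by measurable
    have "emeasure (distr (gauss4 \<sigma>) borel (\<lambda>x. Ot *v x)) A = emeasure (density lborel \<rho>) ((\<lambda>x. Ot *v x) -` A \<inter> space (density lborel \<rho>))"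
      unfolding g using emeasure_distr[OF hd A] .
    also have "\<dots> = emeasure (density lborel \<rho>) ((\<lambda>x. Ot *v x) -` A)" by simp
    also have "\<dots> = (\<integral>\<^sup>+ x. \<rho> x * indicator ((\<lambda>x. Ot *v x) -` A) x \<partial>lborel)"
      by (rule emeasure_density[OF \<rho>l pre])
    also have "\<dots> = (\<integral>\<^sup>+ x. (\<lambda>y. \<rho> y * indicator A y) (Ot *v x) \<partial>lborel)"
      by (simp add: inv indicator_def)
    also have "\<dots> = (\<integral>\<^sup>+ y. \<rho> y * indicator A y \<partial>(distr lborel borel (\<lambda>x. Ot *v x)))"
    proof -
      have Fm': "(\<lambda>y. \<rho> y * indicator A y) \<in> borel_measurable (distr lborel borel (\<lambda>x. Ot *v x))"
        using Fm by (simp add: measurable_cong_sets[OF sets_distr refl])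
      show ?thesis by (rule nn_integral_distr[OF hl Fm', symmetric])
    qed
    also have "\<dots> = (\<integral>\<^sup>+ y. \<rho> y * indicator A y \<partial>lborel)" by (simp only: lborel_orth[OF o])
    also have "\<dots> = emeasure (gauss4 \<sigma>) A" unfolding g by (rule emeasure_density[OF \<rho>l Al, symmetric])
    finally show "emeasure (distr (gauss4 \<sigma>) borel (\<lambda>x. Ot *v x)) A = emeasure (gauss4 \<sigma>) A" .
  qed
qed


definition Iw :: "real \<Rightarrow> (real^4 \<Rightarrow> real^2) \<Rightarrow> bool" where
  "Iw \<sigma> w \<longleftrightarrow> (\<forall>i. integrable (gauss4 \<sigma>) (\<lambda>\<xi>. (w \<xi> $ i)^2))"
definition Vw :: "real \<Rightarrow> (real^4 \<Rightarrow> real^2) \<Rightarrow> real^2^2" where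
  "Vw \<sigma> w = (\<chi> i j. integral\<^sup>L (gauss4 \<sigma>) (\<lambda>\<xi>. w \<xi> $ i * w \<xi> $ j))"

lemma gm_Iw: "gm_error \<sigma> S M f = (if Iw \<sigma> (residual S M f) then ereal (sqrt (det (Vw \<sigma> (residual S M f)))) else \<infinity>)"
  unfolding gm_error_def Iw_def Vw_def V_out_def ..

lemma sets_gauss[simp]: "sets (gauss4 \<sigma>) = sets borel"
  by (simp add: gauss4_def)

lemma meas_gauss[simp]: "measurable (gauss4 \<sigma>) N = measurable borel N"
  by (rule measurable_cong_sets) simp_all

lemma absprod: "\<bar>a*b\<bar> \<le> a^2 + (b::real)^2"
proof -
  have "0 \<le> (\<bar>a\<bar> - \<bar>b\<bar>)^2" by simp
  then have "2*(\<bar>a\<bar>*\<bar>b\<bar>) \<le> \<bar>a\<bar>*\<bar>a\<bar> + \<bar>b\<bar>*\<bar>b\<bar>" by (simp add: power2_eq_square algebra_simps)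
  then have "2*\<bar>a*b\<bar> \<le> a^2 + b^2" by (simp add: abs_mult power2_eq_square)
  moreover have "0 \<le> \<bar>a*b\<bar>" by simp
  ultimately show ?thesis by linarith
qed

lemma prod_int:
  fixes w :: "real^4 \<Rightarrow> real^2"
  assumes wm: "w \<in> borel_measurable borel" and I: "Iw \<sigma> w"
  shows "integrable (gauss4 \<sigma>) (\<lambda>\<xi>. w \<xi> $ i * w \<xi> $ j)"
proof (rule Bochner_Integration.integrable_bound[where f="\<lambda>\<xi>. (w \<xi> $ i)^2 + (w \<xi> $ j)^2"])
  show "integrable (gauss4 \<sigma>) (\<lambda>\<xi>. (w \<xi> $ i)^2 + (w \<xi> $ j)^2)"
    using I unfolding Iw_def by (auto intro!: Bochner_Integration.integrable_add)
  have [measurable]: "(\<lambda>\<xi>. w \<xi> $ k) \<in> borel_measurable borel" for k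
    using wm by measurable
  show "(\<lambda>\<xi>. w \<xi> $ i * w \<xi> $ j) \<in> borel_measurable (gauss4 \<sigma>)" by simp
  show "AE \<xi> in gauss4 \<sigma>. norm (w \<xi> $ i * w \<xi> $ j) \<le> norm ((w \<xi> $ i)^2 + (w \<xi> $ j)^2)"
  proof (rule AE_I2)
    fix \<xi>
    have "\<bar>w \<xi> $ i * w \<xi> $ j\<bar> \<le> (w \<xi> $ i)^2 + (w \<xi> $ j)^2"
      by (rule absprod)
    then show "norm (w \<xi> $ i * w \<xi> $ j) \<le> norm ((w \<xi> $ i)^2 + (w \<xi> $ j)^2)" by simp
  qed
qed

lemma lin_expand:
  fixes K :: "real^2^2" and v :: "real^2"
  shows "(K *v v) $ i * (K *v v) $ j = K$i$1*K$j$1 * (v$1 * v$1) + K$i$1*K$j$2 * (v$1 * v$2)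
      + K$i$2*K$j$1 * (v$2 * v$1) + K$i$2*K$j$2 * (v$2 * v$2)"
  by (simp add: matrix_vector_mult_def sum_2 algebra_simps)

lemma lin_int:
  fixes K :: "real^2^2" and w :: "real^4 \<Rightarrow> real^2"
  assumes wm: "w \<in> borel_measurable borel" and I: "Iw \<sigma> w"
  shows "integrable (gauss4 \<sigma>) (\<lambda>\<xi>. (K *v w \<xi>) $ i * (K *v w \<xi>) $ j)"
    "integral\<^sup>L (gauss4 \<sigma>) (\<lambda>\<xi>. (K *v w \<xi>) $ i * (K *v w \<xi>) $ j) =
      K$i$1*K$j$1 * Vw \<sigma> w $1$1 + K$i$1*K$j$2 * Vw \<sigma> w $1$2 + K$i$2*K$j$1 * Vw \<sigma> w $2$1 + K$i$2*K$j$2 * Vw \<sigma> w $2$2"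
proof -
  note p = prod_int[OF wm I]
  show "integrable (gauss4 \<sigma>) (\<lambda>\<xi>. (K *v w \<xi>) $ i * (K *v w \<xi>) $ j)"
    unfolding lin_expand using p
    by (intro Bochner_Integration.integrable_add integrable_mult_right) auto
  show "integral\<^sup>L (gauss4 \<sigma>) (\<lambda>\<xi>. (K *v w \<xi>) $ i * (K *v w \<xi>) $ j) =
      K$i$1*K$j$1 * Vw \<sigma> w $1$1 + K$i$1*K$j$2 * Vw \<sigma> w $1$2 + K$i$2*K$j$1 * Vw \<sigma> w $2$1 + K$i$2*K$j$2 * Vw \<sigma> w $2$2"
    unfolding lin_expand Vw_def using p
    by (simp add: Bochner_Integration.integral_add Bochner_Integration.integrable_add)
qed

lemma lin_Iw_Vw:
  fixes K :: "real^2^2" and w :: "real^4 \<Rightarrow> real^2"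
  assumes wm: "w \<in> borel_measurable borel" and I: "Iw \<sigma> w"
  shows "Iw \<sigma> (\<lambda>\<xi>. K *v w \<xi>)" "Vw \<sigma> (\<lambda>\<xi>. K *v w \<xi>) = K ** Vw \<sigma> w ** transpose K"
proof -
  show "Iw \<sigma> (\<lambda>\<xi>. K *v w \<xi>)" unfolding Iw_def power2_eq_square using lin_int(1)[OF wm I] by blast
  have e: "Vw \<sigma> (\<lambda>\<xi>. K *v w \<xi>) $ i $ j = (K ** Vw \<sigma> w ** transpose K) $ i $ j" for i j
  proof -
    have "Vw \<sigma> (\<lambda>\<xi>. K *v w \<xi>) $ i $ j = integral\<^sup>L (gauss4 \<sigma>) (\<lambda>\<xi>. (K *v w \<xi>) $ i * (K *v w \<xi>) $ j)"
      by (simp add: Vw_def)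
    also have "\<dots> = K$i$1*K$j$1 * Vw \<sigma> w $1$1 + K$i$1*K$j$2 * Vw \<sigma> w $1$2 + K$i$2*K$j$1 * Vw \<sigma> w $2$1 + K$i$2*K$j$2 * Vw \<sigma> w $2$2"
      by (rule lin_int(2)[OF wm I])
    also have "\<dots> = (K ** Vw \<sigma> w ** transpose K) $ i $ j"
      by (simp add: matrix_matrix_mult_def transpose_def sum_2 algebra_simps)
    finally show ?thesis .
  qed
  show "Vw \<sigma> (\<lambda>\<xi>. K *v w \<xi>) = K ** Vw \<sigma> w ** transpose K"
    using e by (simp add: vec_eq_iff)
qed

lemma orth_int:
  assumes o: "transpose Ot ** Ot = mat 1" and g: "g \<in> borel_measurable borel"
  shows "integrable (gauss4 \<sigma>) (\<lambda>\<xi>. g ((Ot::real^4^4) *v \<xi>)) \<longleftrightarrow> integrable (gauss4 \<sigma>) (g :: real^4 \<Rightarrow> real)"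
    "integral\<^sup>L (gauss4 \<sigma>) (\<lambda>\<xi>. g (Ot *v \<xi>)) = integral\<^sup>L (gauss4 \<sigma>) g"
proof -
  have hm: "(\<lambda>x. Ot *v x) \<in> measurable (gauss4 \<sigma>) borel" by simp
  show "integrable (gauss4 \<sigma>) (\<lambda>\<xi>. g (Ot *v \<xi>)) \<longleftrightarrow> integrable (gauss4 \<sigma>) g"
    using integrable_distr_eq[OF hm g] gauss_orth[OF o, of \<sigma>] by simp
  show "integral\<^sup>L (gauss4 \<sigma>) (\<lambda>\<xi>. g (Ot *v \<xi>)) = integral\<^sup>L (gauss4 \<sigma>) g"
    using integral_distr[OF hm g] gauss_orth[OF o, of \<sigma>] by simp
qed

lemma orth_Iw_Vw:
  assumes o: "transpose Ot ** Ot = mat 1" and wm: "w \<in> borel_measurable borel"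
  shows "Iw \<sigma> (\<lambda>\<xi>. w ((Ot::real^4^4) *v \<xi>)) \<longleftrightarrow> Iw \<sigma> w" "Vw \<sigma> (\<lambda>\<xi>. w (Ot *v \<xi>)) = Vw \<sigma> w"
proof -
  have [measurable]: "(\<lambda>\<xi>. w \<xi> $ k) \<in> borel_measurable borel" for k using wm by measurable
  have m1: "(\<lambda>\<xi>. (w \<xi> $ i)^2) \<in> borel_measurable borel" for i by measurable
  have m2: "(\<lambda>\<xi>. w \<xi> $ i * w \<xi> $ j) \<in> borel_measurable borel" for i j by measurable
  show "Iw \<sigma> (\<lambda>\<xi>. w (Ot *v \<xi>)) \<longleftrightarrow> Iw \<sigma> w"
    unfolding Iw_def using orth_int(1)[OF o m1] by simp
  show "Vw \<sigma> (\<lambda>\<xi>. w (Ot *v \<xi>)) = Vw \<sigma> w"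
    unfolding Vw_def using orth_int(2)[OF o m2] by simp
qed

lemma gm_transfer:
  fixes A :: "real^2^2" and rS rT :: "real^4 \<Rightarrow> real^2"
  assumes rS: "\<And>\<xi>. rS \<xi> = A *v rT (Ot *v \<xi>)" and dA: "det A = 1"
    and rTm: "rT \<in> borel_measurable borel" and o: "transpose Ot ** Ot = mat 1"
  shows "(if Iw \<sigma> rS then ereal (sqrt (det (Vw \<sigma> rS))) else \<infinity>) =
         (if Iw \<sigma> rT then ereal (sqrt (det (Vw \<sigma> rT))) else \<infinity>)"
proof -
  define u where "u = (\<lambda>\<xi>. rT (Ot *v \<xi>))"
  have um: "u \<in> borel_measurable borel" unfolding u_def using rTm by measurable
  have rSu: "rS = (\<lambda>\<xi>. A *v u \<xi>)" using rS by (auto simp: u_def)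
  have rSm: "rS \<in> borel_measurable borel" unfolding rSu using um by measurable
  have uS: "u = (\<lambda>\<xi>. adj2 A *v rS \<xi>)"
    using dA by (simp add: rSu matrix_vector_mul_assoc adj2_l)
  have Iu: "Iw \<sigma> rT \<longleftrightarrow> Iw \<sigma> u" "Vw \<sigma> u = Vw \<sigma> rT"
    unfolding u_def using orth_Iw_Vw[OF o rTm] by auto
  show ?thesis
  proof (cases "Iw \<sigma> u")
    case True
    have "Iw \<sigma> rS" unfolding rSu by (rule lin_Iw_Vw(1)[OF um True])
    moreover have "Vw \<sigma> rS = A ** Vw \<sigma> u ** transpose A" unfolding rSu by (rule lin_Iw_Vw(2)[OF um True])
    moreover have "det (A ** Vw \<sigma> u ** transpose A) = det (Vw \<sigma> u)" using dA by (simp add: det_mul)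
    ultimately show ?thesis using True Iu by simp
  next
    case False
    have "\<not> Iw \<sigma> rS"
    proof
      assume "Iw \<sigma> rS"
      then have "Iw \<sigma> u" unfolding uS by (rule lin_Iw_Vw(1)[OF rSm])
      then show False using False by simp
    qed
    then show ?thesis using False Iu by simp
  qed
qed


lemma adjT_Om: "transpose (adj2 B) ** Omega1 = Omega1 ** B"
  by (simp add: M2 adj2_def)

lemma res_id:
  assumes dec: "matrix_inv Senc = blk A 0 0 B ** matrix_inv (S_TMS G) ** Ot" and dA: "det A = 1"
  shows "residual Senc M f \<xi> = A *v residual (S_TMS G) (adj2 B ** M) (\<lambda>s. adj2 A *v f s) (Ot *v \<xi>)"
proof -
  define y where "y = matrix_inv (S_TMS G) *v (Ot *v \<xi>)"
  have x: "matrix_inv Senc *v \<xi> = blk A 0 0 B *v y"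
    unfolding dec y_def by (simp add: matrix_vector_mul_assoc matrix_mul_assoc)
  have d: "data_part (blk A 0 0 B *v y) = A *v data_part y" by (simp add: data_blk)
  have a: "anc_part (blk A 0 0 B *v y) = B *v anc_part y" by (simp add: anc_blk)
  have syn: "(transpose M ** Omega1) *v (B *v anc_part y) = (transpose (adj2 B ** M) ** Omega1) *v anc_part y"
  proof -
    have "transpose (adj2 B ** M) ** Omega1 = transpose M ** (transpose (adj2 B) ** Omega1)"
      by (simp add: matrix_transpose_mul matrix_mul_assoc)
    also have "\<dots> = transpose M ** Omega1 ** B" by (simp add: adjT_Om matrix_mul_assoc)
    finally show ?thesis by (simp add: matrix_vector_mul_assoc)
  qed
  have AA: "A *v (adj2 A *v v) = v" for v using dA by (simp add: matrix_vector_mul_assoc adj2_r)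
  show ?thesis
    unfolding residual_def Let_def x d a syn y_def[symmetric]
    by (simp add: matrix_vector_mult_diff_distrib AA)
qed

lemma lam_facts:
  fixes M B :: "real^2^2"
  assumes cM: "transpose M ** Omega1 ** M = (2*pi) *\<^sub>R Omega1" and dB: "det B = 1"
  defines "\<Lambda> \<equiv> (1 / sqrt (2*pi)) *\<^sub>R ((adj2 B ** M) ** (- Omega1))"
  shows "symplectic2 \<Lambda>" "sqrt (2*pi) *\<^sub>R (\<Lambda> ** Omega1) = adj2 B ** M"
proof -
  have o12: "Omega1 $ 1 $ 2 = 1" by (simp add: M2)
  have e: "det M *\<^sub>R Omega1 = (2*pi) *\<^sub>R Omega1" using cM sand2[of M] by simp
  have "(det M *\<^sub>R Omega1) $ 1 $ 2 = ((2*pi) *\<^sub>R Omega1) $ 1 $ 2" by (simp only: e)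
  then have dM: "det M = 2*pi" using o12 by simp
  have dO: "det (- Omega1) = 1" by (simp add: M2)
  have "det \<Lambda> = (1 / sqrt (2*pi))^2 * (det (adj2 B) * det M * det (- Omega1))"
    unfolding \<Lambda>_def by (simp add: det_scale2 det_mul)
  also have "\<dots> = 1" using dB dM dO by (simp add: det_adj2 power_divide)
  finally show "symplectic2 \<Lambda>" by (simp add: sympl2_iff)
  have "sqrt (2*pi) *\<^sub>R (\<Lambda> ** Omega1) = (sqrt (2*pi) * (1 / sqrt (2*pi))) *\<^sub>R ((adj2 B ** M) ** (- (Omega1 ** Omega1)))"
    unfolding \<Lambda>_def by (simp add: sc_l neg_mult_l neg_mult_r matrix_mul_assoc)
  also have "\<dots> = adj2 B ** M" by (simp add: Om_Om)
  finally show "sqrt (2*pi) *\<^sub>R (\<Lambda> ** Omega1) = adj2 B ** M" .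
qed

theorem theorem4:
  fixes \<sigma> :: real and Senc :: "real^4^4" and M :: "real^2^2" and f :: "real^2 \<Rightarrow> real^2"
  assumes "\<sigma> > 0"
    and "symplectic4 Senc"
    and "invertible M"
    and "f \<in> borel_measurable borel"
    and "transpose M ** Omega1 ** M = (2*pi) *\<^sub>R Omega1"
  shows "\<exists>G \<Lambda> (f' :: real^2 \<Rightarrow> real^2). G \<ge> 1 \<and> symplectic2 \<Lambda> \<and> f' \<in> borel_measurable borel \<and>
           gm_error \<sigma> (S_TMS G) (sqrt (2*pi) *\<^sub>R (\<Lambda> ** Omega1)) f' = gm_error \<sigma> Senc M f"
proof -
  obtain A B G Ot where AB: "det A = 1" "det B = 1" "G \<ge> 1" and o: "transpose Ot ** Ot = mat 1"
    and dec: "matrix_inv Senc = blk A 0 0 B ** matrix_inv (S_TMS G) ** Ot"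
    using decomp[OF assms(2)] by blast
  define \<Lambda> where "\<Lambda> = (1 / sqrt (2*pi)) *\<^sub>R ((adj2 B ** M) ** (- Omega1))"
  define f' where "f' = (\<lambda>s. adj2 A *v f s)"
  note lf = lam_facts[OF assms(5) AB(2), folded \<Lambda>_def]
  have f'm: "f' \<in> borel_measurable borel" unfolding f'_def using assms(4) by measurable
  have rTm: "residual (S_TMS G) (adj2 B ** M) f' \<in> borel_measurable borel"
    by (rule residual_meas[OF f'm])
  have "gm_error \<sigma> Senc M f = gm_error \<sigma> (S_TMS G) (adj2 B ** M) f'"
    unfolding gm_Iw
    by (rule gm_transfer[OF _ AB(1) rTm o]) (simp add: res_id[OF dec AB(1)] f'_def)
  then show ?thesis using AB(3) lf f'm by (intro exI[of _ G] exI[of _ \<Lambda>] exI[of _ f']) simp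
qed

end
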